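(* Let $P$ be a polyhedron (a polyhedral map of genus 0) and $T$ the truncation operation. Then $\mathrm{Aut}(P)=\mathrm{Aut}(T(P))$, in the sense that every automorphism of $T(P)$ is induced by an automorphism of $P$; in particular $|\mathrm{Aut}(T(P))|=|\mathrm{Aut}(P)|$.
   Context: A polyhedral map is a 3-connected graph embedded in a closed orientable surface such that every face is an open disc and the closures of any two faces have connected intersection; $\mathrm{Aut}(P)$ denotes its automorphism group. The truncation $T(P)$ of $P$ is the map obtained by "cutting off" every vertex: $T(P)$ has one vertex $(v,e)$ for every pair of a vertex $v$ and an incident edge $e$ of $P$; for each edge $e=vw$ of $P$ the vertices $(v,e)$ and $(w,e)$ are adjacent, and for each vertex $v$ the vertices $(v,e)$, $(v,e')$ are adjacent whenever $e,e'$ are consecutive in the rotation around $v$. Thus each vertex $v$ of degree $d$ is replaced by a face of size $d$ and each face of size $k$ of $P$ becomes a face of size $2k$. Every automorphism of $P$ induces an automorphism of $T(P)$ in the obvious way. *)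

theory Defs
  imports Main
begin

text \<open>A map on a closed orientable surface is encoded by a finite set of darts D,
  a fixed-point-free involution alpha (the two darts of an edge) and a permutation
  sigma (rotation of darts around a vertex).  Every face of such a map is an
  open disc by construction.\<close>

definition orb :: "('d \<Rightarrow> 'd) \<Rightarrow> 'd \<Rightarrow> 'd set" where
  "orb f x = {(f ^^ n) x | n. True}"

definition vertex_of :: "('d \<Rightarrow> 'd) \<Rightarrow> 'd \<Rightarrow> 'd set" where
  "vertex_of \<sigma> d = orb \<sigma> d"

definition map_vertices :: "'d set \<Rightarrow> ('d \<Rightarrow> 'd) \<Rightarrow> 'd set set" where
  "map_vertices D \<sigma> = orb \<sigma> ` D"

definition map_edges :: "'d set \<Rightarrow> ('d \<Rightarrow> 'd) \<Rightarrow> 'd set set" where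
  "map_edges D \<alpha> = (\<lambda>d. {d, \<alpha> d}) ` D"

definition map_faces :: "'d set \<Rightarrow> ('d \<Rightarrow> 'd) \<Rightarrow> ('d \<Rightarrow> 'd) \<Rightarrow> 'd set set" where
  "map_faces D \<alpha> \<sigma> = orb (\<sigma> \<circ> \<alpha>) ` D"

definition comb_map :: "'d set \<Rightarrow> ('d \<Rightarrow> 'd) \<Rightarrow> ('d \<Rightarrow> 'd) \<Rightarrow> bool" where
  "comb_map D \<alpha> \<sigma> \<longleftrightarrow>
     finite D \<and> D \<noteq> {} \<and> bij_betw \<alpha> D D \<and> bij_betw \<sigma> D D \<and>
     (\<forall>d\<in>D. \<alpha> d \<noteq> d \<and> \<alpha> (\<alpha> d) = d) \<and>
     (\<forall>d\<in>D. \<forall>d'\<in>D. (d, d') \<in> ({(x, \<alpha> x) | x. x \<in> D} \<union> {(x, \<sigma> x) | x. x \<in> D})\<^sup>*)"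

definition genus0 :: "'d set \<Rightarrow> ('d \<Rightarrow> 'd) \<Rightarrow> ('d \<Rightarrow> 'd) \<Rightarrow> bool" where
  "genus0 D \<alpha> \<sigma> \<longleftrightarrow>
     int (card (map_vertices D \<sigma>)) - int (card (map_edges D \<alpha>))
       + int (card (map_faces D \<alpha> \<sigma>)) = 2"

definition map_adj :: "'d set \<Rightarrow> ('d \<Rightarrow> 'd) \<Rightarrow> ('d \<Rightarrow> 'd) \<Rightarrow> 'd set \<Rightarrow> 'd set \<Rightarrow> bool" where
  "map_adj D \<alpha> \<sigma> u w \<longleftrightarrow> (\<exists>d\<in>D. orb \<sigma> d = u \<and> orb \<sigma> (\<alpha> d) = w)"

definition simple_map :: "'d set \<Rightarrow> ('d \<Rightarrow> 'd) \<Rightarrow> ('d \<Rightarrow> 'd) \<Rightarrow> bool" where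
  "simple_map D \<alpha> \<sigma> \<longleftrightarrow>
     (\<forall>d\<in>D. orb \<sigma> (\<alpha> d) \<noteq> orb \<sigma> d) \<and>
     (\<forall>d\<in>D. \<forall>d'\<in>D. orb \<sigma> d = orb \<sigma> d' \<and> orb \<sigma> (\<alpha> d) = orb \<sigma> (\<alpha> d') \<longrightarrow> d = d')"

definition graph_connected_on :: "'v set \<Rightarrow> ('v \<Rightarrow> 'v \<Rightarrow> bool) \<Rightarrow> bool" where
  "graph_connected_on W adj \<longleftrightarrow>
     (\<forall>u\<in>W. \<forall>w\<in>W. (u, w) \<in> {(x, y). x \<in> W \<and> y \<in> W \<and> adj x y}\<^sup>*)"

definition three_connected :: "'d set \<Rightarrow> ('d \<Rightarrow> 'd) \<Rightarrow> ('d \<Rightarrow> 'd) \<Rightarrow> bool" where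
  "three_connected D \<alpha> \<sigma> \<longleftrightarrow>
     simple_map D \<alpha> \<sigma> \<and> card (map_vertices D \<sigma>) \<ge> 4 \<and>
     (\<forall>S \<subseteq> map_vertices D \<sigma>. card S < 3 \<longrightarrow>
        graph_connected_on (map_vertices D \<sigma> - S) (map_adj D \<alpha> \<sigma>))"

text \<open>Closure of a face f (a set of darts): its boundary vertices and edges.
  The intersection of two face closures is the subcomplex formed by the common
  vertices and common (closed) edges; it is connected iff the graph with these
  vertices and edges is connected (the empty set counts as connected).\<close>
definition face_closures_meet_connected :: "'d set \<Rightarrow> ('d \<Rightarrow> 'd) \<Rightarrow> ('d \<Rightarrow> 'd) \<Rightarrow> bool" where
  "face_closures_meet_connected D \<alpha> \<sigma> \<longleftrightarrow>
     (\<forall>f\<in>map_faces D \<alpha> \<sigma>. \<forall>g\<in>map_faces D \<alpha> \<sigma>. f \<noteq> g \<longrightarrow>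
        graph_connected_on (orb \<sigma> ` f \<inter> orb \<sigma> ` g)
          (\<lambda>u w. \<exists>d\<in>D. {d, \<alpha> d} \<in> (\<lambda>x. {x, \<alpha> x}) ` f \<inter> (\<lambda>x. {x, \<alpha> x}) ` g \<and>
                        orb \<sigma> d = u \<and> orb \<sigma> (\<alpha> d) = w))"

definition polyhedral_map :: "'d set \<Rightarrow> ('d \<Rightarrow> 'd) \<Rightarrow> ('d \<Rightarrow> 'd) \<Rightarrow> bool" where
  "polyhedral_map D \<alpha> \<sigma> \<longleftrightarrow>
     comb_map D \<alpha> \<sigma> \<and> three_connected D \<alpha> \<sigma> \<and> face_closures_meet_connected D \<alpha> \<sigma>"

definition polyhedron :: "'d set \<Rightarrow> ('d \<Rightarrow> 'd) \<Rightarrow> ('d \<Rightarrow> 'd) \<Rightarrow> bool" where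
  "polyhedron D \<alpha> \<sigma> \<longleftrightarrow> polyhedral_map D \<alpha> \<sigma> \<and> genus0 D \<alpha> \<sigma>"

definition orientation_preserving :: "'d set \<Rightarrow> ('d \<Rightarrow> 'd) \<Rightarrow> ('d \<Rightarrow> 'd) \<Rightarrow> bool" where
  "orientation_preserving D \<sigma> g \<longleftrightarrow> (\<forall>d\<in>D. g (\<sigma> d) = \<sigma> (g d))"

definition map_aut :: "'d set \<Rightarrow> ('d \<Rightarrow> 'd) \<Rightarrow> ('d \<Rightarrow> 'd) \<Rightarrow> ('d \<Rightarrow> 'd) \<Rightarrow> bool" where
  "map_aut D \<alpha> \<sigma> g \<longleftrightarrow>
     bij_betw g D D \<and> (\<forall>d. d \<notin> D \<longrightarrow> g d = d) \<and>
     (\<forall>d\<in>D. g (\<alpha> d) = \<alpha> (g d)) \<and>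
     (orientation_preserving D \<sigma> g \<or> (\<forall>d\<in>D. g (\<sigma> d) = inv_into D \<sigma> (g d)))"

definition Aut :: "'d set \<Rightarrow> ('d \<Rightarrow> 'd) \<Rightarrow> ('d \<Rightarrow> 'd) \<Rightarrow> ('d \<Rightarrow> 'd) set" where
  "Aut D \<alpha> \<sigma> = {g. map_aut D \<alpha> \<sigma> g}"

text \<open>The vertices of T(P) are the darts d = (v,e) of P.  Each has degree 3; its darts are
  (d,0) (along the edge e, towards alpha d), (d,1) (towards sigma d) and
  (d,2) (towards sigma^-1 d).\<close>

definition trunc_darts :: "'d set \<Rightarrow> ('d \<times> nat) set" where
  "trunc_darts D = D \<times> {0, 1, 2}"

definition trunc_alpha :: "'d set \<Rightarrow> ('d \<Rightarrow> 'd) \<Rightarrow> ('d \<Rightarrow> 'd) \<Rightarrow> 'd \<times> nat \<Rightarrow> 'd \<times> nat" where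
  "trunc_alpha D \<alpha> \<sigma> x =
     (if x \<in> trunc_darts D then
        (case x of (d, i) \<Rightarrow>
          if i = 0 then (\<alpha> d, 0)
          else if i = 1 then (\<sigma> d, 2)
          else (inv_into D \<sigma> d, 1))
      else x)"

definition trunc_sigma :: "'d set \<Rightarrow> 'd \<times> nat \<Rightarrow> 'd \<times> nat" where
  "trunc_sigma D x =
     (if x \<in> trunc_darts D then (case x of (d, i) \<Rightarrow> (d, (i + 1) mod 3)) else x)"

definition trunc_induced :: "'d set \<Rightarrow> ('d \<Rightarrow> 'd) \<Rightarrow> ('d \<Rightarrow> 'd) \<Rightarrow> 'd \<times> nat \<Rightarrow> 'd \<times> nat" where
  "trunc_induced D \<sigma> g x =
     (if x \<in> trunc_darts D then
        (case x of (d, i) \<Rightarrow>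
          (g d, if orientation_preserving D \<sigma> g \<or> i = 0 then i else 3 - i))
      else x)"

end

theory Submission
  imports Defs
begin


lemma orb_iff: "y \<in> orb f x \<longleftrightarrow> (\<exists>n. y = (f ^^ n) x)"
  by (auto simp: orb_def)

lemma orb_self: "x \<in> orb f x"
  unfolding orb_iff by (rule exI[of _ 0]) simp

lemma orb_step: "y \<in> orb f x \<Longrightarrow> f y \<in> orb f x"
proof -
  assume "y \<in> orb f x"
  then obtain n where "y = (f ^^ n) x" unfolding orb_iff by blast
  hence "f y = (f ^^ Suc n) x" by simp
  thus ?thesis unfolding orb_iff by blast
qed

lemma funpow_in: "\<forall>x\<in>A. f x \<in> A \<Longrightarrow> x \<in> A \<Longrightarrow> (f ^^ n) x \<in> A"
  by (induct n) simp_all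

lemma orb_subset: "\<forall>x\<in>A. f x \<in> A \<Longrightarrow> x \<in> A \<Longrightarrow> orb f x \<subseteq> A"
proof
  fix y assume "\<forall>x\<in>A. f x \<in> A" "x \<in> A" "y \<in> orb f x"
  then obtain n where "y = (f ^^ n) x" unfolding orb_iff by blast
  thus "y \<in> A" using funpow_in \<open>\<forall>x\<in>A. f x \<in> A\<close> \<open>x \<in> A\<close> by simp
qed

lemma orb_trans: "y \<in> orb f x \<Longrightarrow> z \<in> orb f y \<Longrightarrow> z \<in> orb f x"
proof -
  assume "y \<in> orb f x" "z \<in> orb f y"
  then obtain n m where nm: "y = (f ^^ n) x" "z = (f ^^ m) y" unfolding orb_iff by blast
  have "f ^^ (m + n) = f ^^ m \<circ> f ^^ n" by (rule funpow_add)
  hence "z = (f ^^ (m + n)) x" using nm by simp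
  thus ?thesis unfolding orb_iff by blast
qed

lemma orb_mono: "y \<in> orb f x \<Longrightarrow> orb f y \<subseteq> orb f x"
proof
  fix z assume "y \<in> orb f x" "z \<in> orb f y"
  thus "z \<in> orb f x" by (rule orb_trans)
qed

lemma orb_induct:
  assumes "y \<in> orb f x" "P x" "\<And>z. P z \<Longrightarrow> P (f z)"
  shows "P y"
proof -
  obtain n where "y = (f ^^ n) x" using assms(1) unfolding orb_iff by blast
  moreover have "P ((f ^^ n) x)" for n by (induct n) (simp_all add: assms)
  ultimately show ?thesis by simp
qed

lemma inj_on_funpow: "inj_on f A \<Longrightarrow> \<forall>x\<in>A. f x \<in> A \<Longrightarrow> inj_on (f ^^ n) A"
proof (induct n)
  case 0 then show ?case by simp
next
  case (Suc n)
  have "inj_on (f \<circ> (f ^^ n)) A"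
  proof (rule comp_inj_on)
    show "inj_on (f ^^ n) A" using Suc by simp
    have "(f ^^ n) ` A \<subseteq> A" using funpow_in[OF Suc(3)] by (simp add: image_subset_iff)
    thus "inj_on f ((f ^^ n) ` A)" using Suc(2) inj_on_subset by blast
  qed
  then show ?case by (simp add: comp_def)
qed

lemma periodic:
  assumes "finite A" "inj_on f A" "\<forall>x\<in>A. f x \<in> A" "x \<in> A"
  shows "\<exists>n>0. (f ^^ n) x = x"
proof -
  have inA: "(f ^^ n) x \<in> A" for n using funpow_in[OF assms(3,4)] .
  have "range (\<lambda>n. (f ^^ n) x) \<subseteq> A" using inA by (simp add: image_subset_iff)
  hence fin: "finite (range (\<lambda>n. (f ^^ n) x))" using assms(1) finite_subset by blast
  have "\<not> inj (\<lambda>n. (f ^^ n) x)"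
  proof
    assume "inj (\<lambda>n. (f ^^ n) x)"
    hence "finite (UNIV :: nat set)" using finite_imageD[OF fin] by simp
    thus False by simp
  qed
  then obtain i j where ij: "i \<noteq> j" "(f ^^ i) x = (f ^^ j) x" unfolding inj_def by auto
  have "\<exists>i j. i < j \<and> (f ^^ i) x = (f ^^ j) x"
  proof (cases "i < j")
    case True thus ?thesis using ij by blast
  next
    case False hence "j < i" using ij(1) by simp
    thus ?thesis using ij(2) by (intro exI[of _ j] exI[of _ i]) simp
  qed
  then obtain i j where ij: "i < j" "(f ^^ i) x = (f ^^ j) x" by blast
  have "f ^^ j = f ^^ i \<circ> f ^^ (j - i)"
    using ij(1) funpow_add[of i "j - i" f] by simp
  hence "(f ^^ i) ((f ^^ (j - i)) x) = (f ^^ j) x" by simp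
  hence eq: "(f ^^ i) ((f ^^ (j - i)) x) = (f ^^ i) x" using ij by simp
  have "inj_on (f ^^ i) A" using inj_on_funpow[OF assms(2,3)] .
  hence "(f ^^ (j - i)) x = x" using inj_onD[OF _ eq inA assms(4)] by blast
  thus ?thesis using ij(1) by (intro exI[of _ "j - i"]) simp
qed

lemma orb_sym:
  assumes "finite A" "inj_on f A" "\<forall>x\<in>A. f x \<in> A" "x \<in> A" "y \<in> orb f x"
  shows "x \<in> orb f y"
proof -
  obtain m where m: "y = (f ^^ m) x" using assms(5) unfolding orb_iff by blast
  obtain n where n: "n > 0" "(f ^^ n) x = x" using periodic[OF assms(1-4)] by blast
  have "((f ^^ n) ^^ q) x = x" for q by (induct q) (use n in simp_all)
  hence nm: "(f ^^ (n * m)) x = x" by (simp add: funpow_mult)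
  have "m \<le> n * m" using n(1) by simp
  hence "f ^^ (n * m) = f ^^ (n * m - m) \<circ> f ^^ m"
    using funpow_add[of "n * m - m" m f] by simp
  hence "(f ^^ (n * m - m)) y = (f ^^ (n * m)) x" using m by simp
  hence "x = (f ^^ (n * m - m)) y" using nm by simp
  thus ?thesis unfolding orb_iff by blast
qed

lemma orb_eq:
  assumes "finite A" "inj_on f A" "\<forall>x\<in>A. f x \<in> A" "x \<in> A" "y \<in> orb f x"
  shows "orb f y = orb f x"
proof (rule equalityI)
  show "orb f y \<subseteq> orb f x" by (rule orb_mono[OF assms(5)])
  show "orb f x \<subseteq> orb f y" by (rule orb_mono[OF orb_sym[OF assms]])
qed

lemma orb_conj:
  assumes "\<forall>x\<in>A. p x \<in> A" "\<forall>x\<in>A. k (p x) = q (k x)" "x \<in> A"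
  shows "orb q (k x) = k ` orb p x"
proof -
  have H: "(q ^^ n) (k x) = k ((p ^^ n) x) \<and> (p ^^ n) x \<in> A" for n
    by (induct n) (use assms in simp_all)
  show ?thesis
  proof (intro equalityI subsetI)
    fix y assume "y \<in> orb q (k x)"
    then obtain n where "y = (q ^^ n) (k x)" unfolding orb_iff by blast
    hence "y = k ((p ^^ n) x)" using H by simp
    moreover have "(p ^^ n) x \<in> orb p x" unfolding orb_iff by blast
    ultimately show "y \<in> k ` orb p x" by blast
  next
    fix y assume "y \<in> k ` orb p x"
    then obtain z where z: "z \<in> orb p x" "y = k z" by blast
    then obtain n where "z = (p ^^ n) x" unfolding orb_iff by blast
    hence "y = (q ^^ n) (k x)" using H z by simp
    thus "y \<in> orb q (k x)" unfolding orb_iff by blast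
  qed
qed

lemma card_orbs_conj:
  assumes "inj_on k A" "\<forall>x\<in>A. p x \<in> A" "\<forall>x\<in>A. k (p x) = q (k x)"
  shows "card (orb q ` k ` A) = card (orb p ` A)"
proof -
  have "orb q ` k ` A = (\<lambda>x. orb q (k x)) ` A" by (simp add: image_image)
  also have "\<dots> = (\<lambda>x. k ` orb p x) ` A"
    using orb_conj[OF assms(2,3)] by (intro image_cong) simp_all
  also have "\<dots> = (image k) ` (orb p ` A)" by (simp add: image_image)
  finally have eq: "orb q ` k ` A = (image k) ` (orb p ` A)" .
  have "inj_on (image k) (orb p ` A)"
  proof (rule inj_onI)
    fix O1 O2 assume o: "O1 \<in> orb p ` A" "O2 \<in> orb p ` A" "k ` O1 = k ` O2"
    obtain x1 where "x1 \<in> A" "O1 = orb p x1" using o(1) by blast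
    hence s1: "O1 \<subseteq> A" using orb_subset[OF assms(2)] by simp
    obtain x2 where "x2 \<in> A" "O2 = orb p x2" using o(2) by blast
    hence s2: "O2 \<subseteq> A" using orb_subset[OF assms(2)] by simp
    show "O1 = O2" using o(3) s1 s2 assms(1) by (simp add: inj_on_image_eq_iff)
  qed
  thus ?thesis unfolding eq by (simp add: card_image)
qed

lemma orb_cong:
  assumes "\<forall>x\<in>A. f x \<in> A" "\<forall>x\<in>A. f x = g x" "x \<in> A"
  shows "orb f x = orb g x"
proof -
  have H: "(f ^^ n) x = (g ^^ n) x \<and> (f ^^ n) x \<in> A" for n
  proof (induct n)
    case 0 then show ?case using assms(3) by simp
  next
    case (Suc n)
    then have "(f ^^ n) x \<in> A" "(f ^^ n) x = (g ^^ n) x" by blast+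
    then show ?case using assms(1,2) by simp
  qed
  thus ?thesis unfolding orb_def by simp
qed


lemma card_orbs_two_step:
  assumes fin: "finite A" and inj: "inj_on q A" and cl: "\<forall>x\<in>A. q x \<in> A"
    and ZA: "Z \<subseteq> A" and sw: "\<forall>x\<in>A. (q x \<in> Z \<longleftrightarrow> x \<notin> Z)"
  shows "card (orb q ` A) = card (orb (q \<circ> q) ` Z)"
proof -
  have inA: "(q ^^ n) x \<in> A" if "x \<in> A" for x n using funpow_in[OF cl that] .
  have ev: "((q ^^ n) x \<in> Z) = even n" if "x \<in> Z" for x n
  proof (induct n)
    case 0 then show ?case using that by simp
  next
    case (Suc n)
    have "(q ^^ n) x \<in> A" using inA that ZA by blast
    then show ?case using Suc sw by simp
  qed
  have sq: "((q \<circ> q) ^^ m) x = (q ^^ (2 * m)) x" for m x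
    by (induct m) simp_all
  have b: "orb q x \<inter> Z = orb (q \<circ> q) x" if "x \<in> Z" for x
  proof (intro equalityI subsetI)
    fix y assume yy: "y \<in> orb q x \<inter> Z"
    hence "y \<in> orb q x" by blast
    then obtain n where n1: "y = (q ^^ n) x" unfolding orb_iff by blast
    have n: "y = (q ^^ n) x" "y \<in> Z" using n1 yy by blast+
    hence "even n" using ev[OF that] by simp
    then obtain m where "n = 2 * m" by blast
    hence "y = ((q \<circ> q) ^^ m) x" using n sq by simp
    thus "y \<in> orb (q \<circ> q) x" unfolding orb_iff by blast
  next
    fix y assume "y \<in> orb (q \<circ> q) x"
    then obtain m where "y = ((q \<circ> q) ^^ m) x" unfolding orb_iff by blast
    hence y: "y = (q ^^ (2 * m)) x" using sq by simp
    hence "y \<in> orb q x" unfolding orb_iff by blast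
    moreover have "y \<in> Z" using y ev[OF that] by simp
    ultimately show "y \<in> orb q x \<inter> Z" by blast
  qed
  have c: "orb q ` A = orb q ` Z"
  proof (intro equalityI subsetI)
    fix Ob assume "Ob \<in> orb q ` A"
    then obtain x where x: "x \<in> A" "Ob = orb q x" by blast
    show "Ob \<in> orb q ` Z"
    proof (cases "x \<in> Z")
      case True thus ?thesis using x by blast
    next
      case False
      hence qZ: "q x \<in> Z" using sw x(1) by blast
      have "q x \<in> orb q x" by (rule orb_step[OF orb_self])
      hence "orb q (q x) = orb q x" by (rule orb_eq[OF fin inj cl x(1)])
      hence "Ob = orb q (q x)" using x(2) by simp
      thus ?thesis using qZ by (rule image_eqI)
    qed
  next
    fix Ob assume "Ob \<in> orb q ` Z" thus "Ob \<in> orb q ` A" using ZA by blast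
  qed
  have d: "inj_on (\<lambda>Ob. Ob \<inter> Z) (orb q ` Z)"
  proof (rule inj_onI)
    fix O1 O2 assume o: "O1 \<in> orb q ` Z" "O2 \<in> orb q ` Z" "O1 \<inter> Z = O2 \<inter> Z"
    obtain x1 where x1: "x1 \<in> Z" "O1 = orb q x1" using o(1) by blast
    obtain x2 where x2: "x2 \<in> Z" "O2 = orb q x2" using o(2) by blast
    have "x1 \<in> O1 \<inter> Z" using x1 by (simp add: orb_self)
    hence "x1 \<in> orb q x2" using o(3) x2(2) by simp
    hence "orb q x1 = orb q x2" using orb_eq[OF fin inj cl, of x2 x1] x2(1) ZA by blast
    thus "O1 = O2" using x1 x2 by simp
  qed
  have e: "(\<lambda>Ob. Ob \<inter> Z) ` orb q ` Z = orb (q \<circ> q) ` Z"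
  proof -
    have "(\<lambda>Ob. Ob \<inter> Z) ` orb q ` Z = (\<lambda>x. orb q x \<inter> Z) ` Z" by (simp add: image_image)
    also have "\<dots> = orb (q \<circ> q) ` Z" using b by (intro image_cong) simp_all
    finally show ?thesis .
  qed
  show ?thesis unfolding c using card_image[OF d] e by simp
qed

lemma orb_sub_inv:
  assumes "finite A" "inj_on f A" "\<forall>x\<in>A. f x \<in> A" "\<forall>x\<in>A. g x \<in> A"
    "\<forall>y\<in>A. f (g y) = y" "x \<in> A"
  shows "orb g x \<subseteq> orb f x"
proof
  fix y assume "y \<in> orb g x"
  thus "y \<in> orb f x"
    proof -
    have "y \<in> orb f x \<and> y \<in> A"
    proof (rule orb_induct[where P = "\<lambda>y. y \<in> orb f x \<and> y \<in> A", OF \<open>y \<in> orb g x\<close>])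
      show "x \<in> orb f x \<and> x \<in> A" using assms(6) by (simp add: orb_self)
    next
      fix z assume "z \<in> orb f x \<and> z \<in> A"
      hence z: "z \<in> orb f x" "z \<in> A" by blast+
      have gz: "g z \<in> A" using assms(4) z(2) by blast
      have "f (g z) \<in> orb f (g z)" by (rule orb_step[OF orb_self])
      hence "z \<in> orb f (g z)" using assms(5) z(2) by simp
      hence "g z \<in> orb f z" by (rule orb_sym[OF assms(1-3) gz])
      hence "g z \<in> orb f x" by (rule orb_trans[OF z(1)])
      thus "g z \<in> orb f x \<and> g z \<in> A" using gz by blast
    qed
    thus ?thesis by blast
  qed
qed

lemma orb_inv:
  assumes "finite A" "bij_betw s A A" "x \<in> A"
  shows "orb (inv_into A s) x = orb s x"
proof -
  have inj: "inj_on s A" and im: "s ` A = A" using assms(2) by (simp_all add: bij_betw_def)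
  have sA: "\<forall>x\<in>A. s x \<in> A"
  proof
    fix x assume "x \<in> A"
    hence "s x \<in> s ` A" by (rule imageI)
    thus "s x \<in> A" using im by simp
  qed
  have tA: "\<forall>x\<in>A. inv_into A s x \<in> A" using inv_into_into[of _ s A] im by simp
  have st: "\<forall>y\<in>A. s (inv_into A s y) = y" using f_inv_into_f[of _ s A] im by simp
  have ts: "\<forall>y\<in>A. inv_into A s (s y) = y" using inj by (simp add: inv_into_f_f)
  have tinj: "inj_on (inv_into A s) A" using inj_on_inv_into[of A s A] im by simp
  show ?thesis
    using orb_sub_inv[OF assms(1) inj sA tA st assms(3)]
          orb_sub_inv[OF assms(1) tinj tA sA ts assms(3)] by blast
qed


locale pmap =
  fixes D :: "'d set" and \<alpha> \<sigma> :: "'d \<Rightarrow> 'd"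
  assumes poly: "polyhedron D \<alpha> \<sigma>"
begin

lemma cm: "comb_map D \<alpha> \<sigma>" using poly by (simp add: polyhedron_def polyhedral_map_def)
lemma tc: "three_connected D \<alpha> \<sigma>" using poly by (simp add: polyhedron_def polyhedral_map_def)
lemma simp_m: "simple_map D \<alpha> \<sigma>" using tc by (simp add: three_connected_def)
lemma g0: "genus0 D \<alpha> \<sigma>" using poly by (simp add: polyhedron_def)

lemma fin: "finite D" using cm by (simp add: comb_map_def)
lemma bij_a: "bij_betw \<alpha> D D" using cm by (simp add: comb_map_def)
lemma bij_s: "bij_betw \<sigma> D D" using cm by (simp add: comb_map_def)
lemma a_props: "\<forall>d\<in>D. \<alpha> d \<noteq> d \<and> \<alpha> (\<alpha> d) = d" using cm by (simp add: comb_map_def)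
lemma a_neq: "d \<in> D \<Longrightarrow> \<alpha> d \<noteq> d" using a_props by blast
lemma a_a: "d \<in> D \<Longrightarrow> \<alpha> (\<alpha> d) = d" using a_props by blast
lemma inj_a: "inj_on \<alpha> D" using bij_a by (simp add: bij_betw_def)
lemma inj_s: "inj_on \<sigma> D" using bij_s by (simp add: bij_betw_def)
lemma im_a: "\<alpha> ` D = D" using bij_a by (simp add: bij_betw_def)
lemma im_s: "\<sigma> ` D = D" using bij_s by (simp add: bij_betw_def)
lemma a_in: "d \<in> D \<Longrightarrow> \<alpha> d \<in> D"
proof -
  assume "d \<in> D"
  hence "\<alpha> d \<in> \<alpha> ` D" by (rule imageI)
  thus ?thesis using im_a by simp
qed
lemma s_in: "d \<in> D \<Longrightarrow> \<sigma> d \<in> D"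
proof -
  assume "d \<in> D"
  hence "\<sigma> d \<in> \<sigma> ` D" by (rule imageI)
  thus ?thesis using im_s by simp
qed
lemma aD: "\<forall>x\<in>D. \<alpha> x \<in> D" using a_in by blast
lemma sD: "\<forall>x\<in>D. \<sigma> x \<in> D" using s_in by blast

abbreviation si where "si \<equiv> inv_into D \<sigma>"
lemma si_in: "d \<in> D \<Longrightarrow> si d \<in> D" using inv_into_into[of d \<sigma> D] im_s by simp
lemma s_si: "d \<in> D \<Longrightarrow> \<sigma> (si d) = d" using f_inv_into_f[of d \<sigma> D] im_s by simp
lemma si_s: "d \<in> D \<Longrightarrow> si (\<sigma> d) = d" using inj_s by (simp add: inv_into_f_f)

lemma conn:
  assumes "X \<subseteq> D" "x0 \<in> X" "\<forall>x\<in>X. \<alpha> x \<in> X \<and> \<sigma> x \<in> X"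
  shows "X = D"
proof
  show "X \<subseteq> D" by fact
  show "D \<subseteq> X"
  proof
    fix d assume d: "d \<in> D"
    let ?R = "{(x, \<alpha> x) | x. x \<in> D} \<union> {(x, \<sigma> x) | x. x \<in> D}"
    have x0D: "x0 \<in> D" using assms(1,2) by blast
    have "(x0, d) \<in> ?R\<^sup>*" using cm d x0D unfolding comb_map_def by blast
    thus "d \<in> X"
    proof (induct rule: rtrancl_induct)
      case base show ?case by fact
    next
      case (step y z)
      from step(2) obtain x where "x \<in> D" "(y = x \<and> z = \<alpha> x) \<or> (y = x \<and> z = \<sigma> x)" by blast
      thus ?case using step(3) assms(3) by auto
    qed
  qed
qed

lemma orbs_eq: "x \<in> D \<Longrightarrow> y \<in> orb \<sigma> x \<Longrightarrow> orb \<sigma> y = orb \<sigma> x"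
  by (rule orb_eq[OF fin inj_s sD])

lemma no_loop: "d \<in> D \<Longrightarrow> orb \<sigma> (\<alpha> d) \<noteq> orb \<sigma> d"
  using simp_m by (simp add: simple_map_def)

lemma no_multi: "d \<in> D \<Longrightarrow> d' \<in> D \<Longrightarrow> orb \<sigma> d = orb \<sigma> d' \<Longrightarrow> orb \<sigma> (\<alpha> d) = orb \<sigma> (\<alpha> d') \<Longrightarrow> d = d'"
  using simp_m unfolding simple_map_def by blast

lemma deg:
  assumes x: "x \<in> D" and ss: "\<sigma> (\<sigma> x) = x"
  shows False
proof -
  define V where "V = map_vertices D \<sigma>"
  have V: "V = orb \<sigma> ` D" by (simp add: V_def map_vertices_def)
  define v where "v = orb \<sigma> x"
  have vsub: "orb \<sigma> x \<subseteq> {x, \<sigma> x}"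
  proof
    fix y assume "y \<in> orb \<sigma> x"
    thus "y \<in> {x, \<sigma> x}"
    proof (rule orb_induct[where P = "\<lambda>y. y \<in> {x, \<sigma> x}"])
      show "x \<in> {x, \<sigma> x}" by simp
      fix z assume "z \<in> {x, \<sigma> x}" thus "\<sigma> z \<in> {x, \<sigma> x}" using ss by auto
    qed
  qed
  define S where "S = (\<lambda>d. orb \<sigma> (\<alpha> d)) ` {x, \<sigma> x}"
  have finS: "finite S" by (simp add: S_def)
  have "card S \<le> card {x, \<sigma> x}" unfolding S_def by (rule card_image_le) simp
  also have "\<dots> \<le> 2" by (simp add: card_insert_le_m1)
  finally have cS: "card S \<le> 2" .
  have sx: "\<sigma> x \<in> D" using s_in x by blast
  have SV: "S \<subseteq> V" unfolding S_def V using x sx a_in by auto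
  have gc: "graph_connected_on (V - S) (map_adj D \<alpha> \<sigma>)"
    using tc SV cS unfolding three_connected_def V_def by auto
  have vV: "v \<in> V" unfolding V v_def using x by blast
  have vS: "v \<notin> S"
  proof
    assume "v \<in> S"
    then obtain d where d: "d \<in> {x, \<sigma> x}" "v = orb \<sigma> (\<alpha> d)" unfolding S_def by blast
    have dD: "d \<in> D" using d(1) x sx by blast
    have "d \<in> orb \<sigma> x" using d(1) orb_self[of x \<sigma>] orb_step[OF orb_self, of \<sigma> x] by blast
    hence "orb \<sigma> d = orb \<sigma> x" using orbs_eq x by blast
    thus False using no_loop[OF dD] d(2) v_def by simp
  qed
  have c4: "card V \<ge> 4" using tc unfolding three_connected_def V_def by simp
  have finV: "finite V" unfolding V using fin by simp
  have "\<exists>u\<in>V. u \<notin> insert v S"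
  proof (rule ccontr)
    assume "\<not> ?thesis"
    hence "V \<subseteq> insert v S" by blast
    hence "card V \<le> card (insert v S)" using finS by (simp add: card_mono)
    also have "\<dots> \<le> Suc (card S)" using finS by (simp add: card_insert_if)
    finally show False using cS c4 by simp
  qed
  then obtain u where u: "u \<in> V" "u \<notin> insert v S" by blast
  let ?R = "{(a, b). a \<in> V - S \<and> b \<in> V - S \<and> map_adj D \<alpha> \<sigma> a b}"
  have rt: "(v, u) \<in> ?R\<^sup>*" using gc vV vS u unfolding graph_connected_on_def by blast
  have vu: "v \<noteq> u" using u by blast
  have "\<exists>b. (v, b) \<in> ?R"
  proof (rule converse_rtranclE[OF rt])
    assume "v = u" thus ?thesis using vu by simp
  next
    fix y assume "(v, y) \<in> ?R" thus ?thesis by (rule exI)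
  qed
  then obtain b where "(v, b) \<in> ?R" by blast
  hence b: "b \<in> V - S" "map_adj D \<alpha> \<sigma> v b" by auto
  then obtain d where d: "d \<in> D" "orb \<sigma> d = v" "orb \<sigma> (\<alpha> d) = b" unfolding map_adj_def by blast
  have "d \<in> v" using d(2) orb_self[of d \<sigma>] by simp
  hence "d \<in> {x, \<sigma> x}" using vsub v_def by blast
  hence "b \<in> S" unfolding S_def using d(3) by blast
  thus False using b(1) by simp
qed

end


context pmap
begin

lemma ss_neq:
  assumes "x \<in> D" shows "\<sigma> (\<sigma> x) \<noteq> x"
proof
  assume "\<sigma> (\<sigma> x) = x"
  from deg[OF assms this] show False .
qed

lemma s_neq:
  assumes "x \<in> D" shows "\<sigma> x \<noteq> x"
proof
  assume h: "\<sigma> x = x"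
  hence "\<sigma> (\<sigma> x) = x" by simp
  from deg[OF assms this] show False .
qed

abbreviation ph where "ph \<equiv> \<sigma> \<circ> \<alpha>"

lemma phD: "\<forall>x\<in>D. ph x \<in> D" using a_in s_in by simp

lemma inj_ph: "inj_on ph D"
proof (rule comp_inj_on)
  show "inj_on \<alpha> D" by (rule inj_a)
  show "inj_on \<sigma> (\<alpha> ` D)" using inj_s im_a by simp
qed

lemma face3:
  assumes d: "d \<in> D" shows "3 \<le> card (orb ph d)"
proof -
  have ad: "\<alpha> d \<in> D" using a_in d by blast
  have h1: "ph d \<noteq> d"
  proof
    assume "ph d = d"
    hence e: "\<sigma> (\<alpha> d) = d" by simp
    have "\<sigma> (\<alpha> d) \<in> orb \<sigma> (\<alpha> d)" by (rule orb_step[OF orb_self])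
    hence "d \<in> orb \<sigma> (\<alpha> d)" using e by simp
    hence "orb \<sigma> d = orb \<sigma> (\<alpha> d)" by (rule orbs_eq[OF ad])
    thus False using no_loop[OF d] by simp
  qed
  have h2: "ph (ph d) \<noteq> d"
  proof
    assume a2: "ph (ph d) = d"
    define e where "e = \<sigma> (\<alpha> d)"
    have eD: "e \<in> D" unfolding e_def using s_in ad by blast
    have aeD: "\<alpha> e \<in> D" using a_in eD by blast
    have e2: "\<sigma> (\<alpha> e) = d" using a2 by (simp add: e_def)
    have "\<sigma> (\<alpha> e) \<in> orb \<sigma> (\<alpha> e)" by (rule orb_step[OF orb_self])
    hence "d \<in> orb \<sigma> (\<alpha> e)" using e2 by simp
    hence o1: "orb \<sigma> d = orb \<sigma> (\<alpha> e)" by (rule orbs_eq[OF aeD])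
    have "\<sigma> (\<alpha> d) \<in> orb \<sigma> (\<alpha> d)" by (rule orb_step[OF orb_self])
    hence "e \<in> orb \<sigma> (\<alpha> d)" by (simp add: e_def)
    hence "orb \<sigma> e = orb \<sigma> (\<alpha> d)" by (rule orbs_eq[OF ad])
    hence o2: "orb \<sigma> (\<alpha> d) = orb \<sigma> (\<alpha> (\<alpha> e))" using a_a[OF eD] by simp
    have "d = \<alpha> e" by (rule no_multi[OF d aeD o1 o2])
    hence "\<alpha> d = e" using a_a[OF eD] by simp
    hence "\<sigma> (\<alpha> d) = \<alpha> d" by (simp add: e_def)
    hence "\<sigma> (\<sigma> (\<alpha> d)) = \<alpha> d" by simp
    thus False using ss_neq[OF ad] by simp
  qed
  have pd: "ph d \<in> D" using phD d by blast
  have h3: "ph d \<noteq> ph (ph d)"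
  proof
    assume "ph d = ph (ph d)"
    hence "d = ph d" using inj_onD[OF inj_ph _ d pd] by simp
    thus False using h1 by simp
  qed
  have sub: "{d, ph d, ph (ph d)} \<subseteq> orb ph d"
    using orb_self[of d ph] orb_step[OF orb_self, of ph d] orb_step[OF orb_step[OF orb_self], of ph d]
    by simp
  have finO: "finite (orb ph d)" using orb_subset[OF phD d] fin finite_subset by blast
  have "card {d, ph d, ph (ph d)} = 3" using h1 h2 h3 by simp
  thus ?thesis using card_mono[OF finO sub] by simp
qed

end


lemma orbit_bound:
  assumes finA: "finite A" and inj: "inj_on f A" and cl: "\<forall>x\<in>A. f x \<in> A"
    and BA: "B \<subseteq> A" and clB: "\<forall>x\<in>B. f x \<in> B" and c3: "\<forall>x\<in>B. 3 \<le> card (orb f x)"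
  shows "3 * card (orb f ` B) \<le> card B"
proof -
  have finB: "finite B" using finA BA finite_subset by blast
  have U: "\<Union>(orb f ` B) = B"
  proof (intro equalityI subsetI)
    fix y assume "y \<in> \<Union>(orb f ` B)"
    then obtain x where x: "x \<in> B" "y \<in> orb f x" by blast
    thus "y \<in> B" using orb_subset[OF clB x(1)] by blast
  next
    fix y assume "y \<in> B"
    moreover have "y \<in> orb f y" by (rule orb_self)
    ultimately show "y \<in> \<Union>(orb f ` B)" by blast
  qed
  have pw: "pairwise disjnt (orb f ` B)"
  proof (unfold pairwise_def, intro ballI impI)
    fix O1 O2 assume o: "O1 \<in> orb f ` B" "O2 \<in> orb f ` B" "O1 \<noteq> O2"
    obtain x where x: "x \<in> B" "O1 = orb f x" using o(1) by blast
    obtain y where y: "y \<in> B" "O2 = orb f y" using o(2) by blast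
    have xA: "x \<in> A" and yA: "y \<in> A" using x y BA by blast+
    show "disjnt O1 O2"
    proof (rule ccontr)
      assume "\<not> disjnt O1 O2"
      then obtain z where z: "z \<in> O1" "z \<in> O2" unfolding disjnt_def by blast
      have "orb f z = orb f x" using orb_eq[OF finA inj cl xA] z(1) x(2) by simp
      moreover have "orb f z = orb f y" using orb_eq[OF finA inj cl yA] z(2) y(2) by simp
      ultimately show False using o(3) x(2) y(2) by simp
    qed
  qed
  have finO: "\<And>Ob. Ob \<in> orb f ` B \<Longrightarrow> finite Ob"
  proof -
    fix Ob assume "Ob \<in> orb f ` B"
    then obtain x where "x \<in> B" "Ob = orb f x" by blast
    thus "finite Ob" using orb_subset[OF clB] finB finite_subset by blast
  qed
  have "card B = sum card (orb f ` B)"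
    using card_Union_disjoint[OF pw finO] U by simp
  moreover have "of_nat (card (orb f ` B)) * 3 \<le> sum card (orb f ` B)"
  proof (rule sum_bounded_below)
    fix Ob assume "Ob \<in> orb f ` B"
    then obtain x where "x \<in> B" "Ob = orb f x" by blast
    thus "3 \<le> card Ob" using c3 by simp
  qed
  ultimately show ?thesis by simp
qed

context pmap
begin

lemma edges_card:
  assumes WD: "W \<subseteq> D" and sw: "\<forall>e\<in>D. (\<alpha> e \<in> W \<longleftrightarrow> e \<notin> W)"
  shows "card W = card (map_edges D \<alpha>)"
proof -
  have inj: "inj_on (\<lambda>d. {d, \<alpha> d}) W"
  proof (rule inj_onI)
    fix d1 d2 assume d: "d1 \<in> W" "d2 \<in> W" "{d1, \<alpha> d1} = {d2, \<alpha> d2}"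
    have "d1 \<in> {d1, \<alpha> d1}" by simp
    hence "d1 \<in> {d2, \<alpha> d2}" using d(3) by simp
    hence "d1 = d2 \<or> d1 = \<alpha> d2" by simp
    moreover have "d1 \<noteq> \<alpha> d2"
    proof
      assume "d1 = \<alpha> d2"
      hence "\<alpha> d2 \<in> W" using d(1) by simp
      moreover have "d2 \<in> D" using d(2) WD by blast
      ultimately show False using sw d(2) by blast
    qed
    ultimately show "d1 = d2" by simp
  qed
  have im: "(\<lambda>d. {d, \<alpha> d}) ` W = map_edges D \<alpha>"
  proof (intro equalityI subsetI)
    fix E assume "E \<in> (\<lambda>d. {d, \<alpha> d}) ` W"
    then obtain d where "d \<in> W" "E = {d, \<alpha> d}" by blast
    thus "E \<in> map_edges D \<alpha>" unfolding map_edges_def using WD by blast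
  next
    fix E assume "E \<in> map_edges D \<alpha>"
    then obtain d where d: "d \<in> D" "E = {d, \<alpha> d}" unfolding map_edges_def by blast
    show "E \<in> (\<lambda>d. {d, \<alpha> d}) ` W"
    proof (cases "d \<in> W")
      case True thus ?thesis using d(2) by blast
    next
      case False
      hence aW: "\<alpha> d \<in> W" using sw d(1) by blast
      have "E = {\<alpha> d, \<alpha> (\<alpha> d)}" using d a_a[OF d(1)] by (simp add: insert_commute)
      thus ?thesis using aW by blast
    qed
  qed
  show ?thesis using card_image[OF inj] im by simp
qed

lemma euler_contra:
  assumes ZD: "Z \<subseteq> D" and sa: "\<forall>e\<in>D. (\<alpha> e \<in> Z \<longleftrightarrow> e \<notin> Z)"
    and ss: "\<forall>e\<in>D. (\<sigma> e \<in> Z \<longleftrightarrow> e \<notin> Z)"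
    and eq: "card (orb \<sigma> ` D) = card (orb ph ` Z)"
  shows False
proof -
  define C where "C = D - Z"
  have CD: "C \<subseteq> D" by (simp add: C_def)
  have saC: "\<forall>e\<in>D. (\<alpha> e \<in> C \<longleftrightarrow> e \<notin> C)"
  proof
    fix e assume e: "e \<in> D"
    have "\<alpha> e \<in> D" using a_in e by blast
    moreover have "(\<alpha> e \<in> Z) = (e \<notin> Z)" using sa e by blast
    ultimately show "(\<alpha> e \<in> C \<longleftrightarrow> e \<notin> C)" using e by (simp add: C_def)
  qed
  have clZ: "\<forall>x\<in>Z. ph x \<in> Z"
  proof
    fix x assume x: "x \<in> Z"
    have xD: "x \<in> D" using x ZD by blast
    hence axD: "\<alpha> x \<in> D" using a_in by blast
    have "\<alpha> x \<notin> Z" using sa xD x by blast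
    hence "\<sigma> (\<alpha> x) \<in> Z" using ss axD by blast
    thus "ph x \<in> Z" by simp
  qed
  have clC: "\<forall>x\<in>C. ph x \<in> C"
  proof
    fix x assume x: "x \<in> C"
    have xD: "x \<in> D" and xZ: "x \<notin> Z" using x by (simp_all add: C_def)
    hence axD: "\<alpha> x \<in> D" using a_in by blast
    have "\<alpha> x \<in> Z" using sa xD xZ by blast
    hence "\<sigma> (\<alpha> x) \<notin> Z" using ss axD by blast
    moreover have "\<sigma> (\<alpha> x) \<in> D" using s_in axD by blast
    ultimately show "ph x \<in> C" by (simp add: C_def)
  qed
  have f3Z: "\<forall>x\<in>Z. 3 \<le> card (orb ph x)" using face3 ZD by blast
  have f3C: "\<forall>x\<in>C. 3 \<le> card (orb ph x)" using face3 CD by blast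
  have bZ: "3 * card (orb ph ` Z) \<le> card Z" by (rule orbit_bound[OF fin inj_ph phD ZD clZ f3Z])
  have bC: "3 * card (orb ph ` C) \<le> card C" by (rule orbit_bound[OF fin inj_ph phD CD clC f3C])
  have cZ: "card Z = card (map_edges D \<alpha>)" by (rule edges_card[OF ZD sa])
  have cC: "card C = card (map_edges D \<alpha>)" by (rule edges_card[OF CD saC])
  have DU: "D = Z \<union> C" using ZD by (auto simp: C_def)
  have disj: "orb ph ` Z \<inter> orb ph ` C = {}"
  proof (rule ccontr)
    assume "orb ph ` Z \<inter> orb ph ` C \<noteq> {}"
    then obtain x y where xy: "x \<in> Z" "y \<in> C" "orb ph x = orb ph y" by blast
    have "x \<in> orb ph y" using xy(3) orb_self[of x ph] by simp
    hence "x \<in> C" using orb_subset[OF clC xy(2)] by blast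
    thus False using xy(1) by (simp add: C_def)
  qed
  have finZ: "finite Z" using fin ZD finite_subset by blast
  have finC: "finite C" using fin CD finite_subset by blast
  have F: "card (orb ph ` D) = card (orb ph ` Z) + card (orb ph ` C)"
  proof -
    have "orb ph ` D = orb ph ` Z \<union> orb ph ` C" using DU by (simp add: image_Un)
    thus ?thesis using card_Un_disjoint[OF _ _ disj] finZ finC by simp
  qed
  have G: "int (card (orb \<sigma> ` D)) - int (card (map_edges D \<alpha>)) + int (card (orb ph ` D)) = 2"
    using g0 by (simp add: genus0_def map_vertices_def map_faces_def)
  show False using G F bZ bC cZ cC eq by linarith
qed

end


context pmap
begin

abbreviation TD where "TD \<equiv> trunc_darts D"
abbreviation ta where "ta \<equiv> trunc_alpha D \<alpha> \<sigma>"
abbreviation ts where "ts \<equiv> trunc_sigma D"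
abbreviation tsi where "tsi \<equiv> inv_into TD ts"
abbreviation ps where "ps \<equiv> ts \<circ> ta"

lemma TD_iff: "((d, i) \<in> TD) = (d \<in> D \<and> (i = 0 \<or> i = 1 \<or> i = 2))"
  by (auto simp: trunc_darts_def)

lemma TD_cases:
  assumes "x \<in> TD"
  obtains d where "d \<in> D" "x = (d, 0)" | d where "d \<in> D" "x = (d, 1)" | d where "d \<in> D" "x = (d, 2)"
  using assms unfolding trunc_darts_def by auto

lemma ta0: "d \<in> D \<Longrightarrow> ta (d, 0) = (\<alpha> d, 0)" by (simp add: trunc_alpha_def trunc_darts_def)
lemma ta1: "d \<in> D \<Longrightarrow> ta (d, 1) = (\<sigma> d, 2)" by (simp add: trunc_alpha_def trunc_darts_def)
lemma ta2: "d \<in> D \<Longrightarrow> ta (d, 2) = (si d, 1)" by (simp add: trunc_alpha_def trunc_darts_def)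
lemma ts0: "d \<in> D \<Longrightarrow> ts (d, 0) = (d, 1)" by (simp add: trunc_sigma_def trunc_darts_def)
lemma ts1: "d \<in> D \<Longrightarrow> ts (d, 1) = (d, 2)" by (simp add: trunc_sigma_def trunc_darts_def)
lemma ts2: "d \<in> D \<Longrightarrow> ts (d, 2) = (d, 0)" by (simp add: trunc_sigma_def trunc_darts_def)

lemma ta1': "d \<in> D \<Longrightarrow> ta (d, Suc 0) = (\<sigma> d, 2)" using ta1 by simp
lemma ts1': "d \<in> D \<Longrightarrow> ts (d, Suc 0) = (d, 2)" using ts1 by simp
lemma ts0': "d \<in> D \<Longrightarrow> ts (d, 0) = (d, Suc 0)" using ts0 by simp
lemma ta2': "d \<in> D \<Longrightarrow> ta (d, 2) = (si d, Suc 0)" using ta2 by simp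

lemma ta_out: "x \<notin> TD \<Longrightarrow> ta x = x" by (simp add: trunc_alpha_def)
lemma ts_out: "x \<notin> TD \<Longrightarrow> ts x = x" by (simp add: trunc_sigma_def)

lemma taT: "x \<in> TD \<Longrightarrow> ta x \<in> TD"
  by (erule TD_cases) (simp_all add: ta0 ta1 ta2 ta1' ta2' TD_iff a_in s_in si_in)

lemma tsT: "x \<in> TD \<Longrightarrow> ts x \<in> TD"
  by (erule TD_cases) (simp_all add: ts0 ts1 ts2 ts0' ts1' TD_iff)

lemma ts_inj: "inj_on ts TD"
proof (rule inj_on_inverseI)
  fix x assume "x \<in> TD"
  thus "(\<lambda>(d, i). (d, (i + 2) mod 3 :: nat)) (ts x) = x"
    by (rule TD_cases) (simp_all add: ts0 ts1 ts2 ts0' ts1')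
qed

lemma tsi0: "d \<in> D \<Longrightarrow> tsi (d, 0) = (d, 2)"
  by (rule inv_into_f_eq[OF ts_inj]) (simp_all add: TD_iff ts2)
lemma tsi1: "d \<in> D \<Longrightarrow> tsi (d, 1) = (d, 0)"
  by (rule inv_into_f_eq[OF ts_inj]) (simp_all add: TD_iff ts0 ts0')
lemma tsi2: "d \<in> D \<Longrightarrow> tsi (d, 2) = (d, 1)"
  by (rule inv_into_f_eq[OF ts_inj]) (simp_all add: TD_iff ts1 ts1')

lemma tsi1': "d \<in> D \<Longrightarrow> tsi (d, Suc 0) = (d, 0)" using tsi1 by simp
lemma tsi2': "d \<in> D \<Longrightarrow> tsi (d, 2) = (d, Suc 0)" using tsi2 by simp

lemma tsiT: "x \<in> TD \<Longrightarrow> tsi x \<in> TD"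
  by (erule TD_cases) (simp_all add: tsi0 tsi1 tsi2 tsi1' tsi2' TD_iff)

lemma ts_tsi: "x \<in> TD \<Longrightarrow> ts (tsi x) = x"
  by (erule TD_cases) (simp_all add: tsi0 tsi1 tsi2 tsi1' tsi2' ts0 ts1 ts2 ts0' ts1')

lemma ps0: "d \<in> D \<Longrightarrow> ps (d, 0) = (\<alpha> d, 1)" by (simp add: ta0 ts0 a_in)
lemma ps1: "d \<in> D \<Longrightarrow> ps (d, 1) = (\<sigma> d, 0)" by (simp add: ta1 ta1' ts2 s_in)
lemma ps2: "d \<in> D \<Longrightarrow> ps (d, 2) = (si d, 2)" by (simp add: ta2 ts1 ts1' si_in)

end


context pmap
begin

lemma key:
  fixes k :: nat
  assumes hb: "bij_betw h TD TD"
    and vert: "\<forall>d\<in>D. \<exists>e\<in>D. h ` ({d} \<times> {0, 1, 2}) = {e} \<times> {0, 1, 2}"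
    and rT: "\<forall>x\<in>TD. r x \<in> TD"
    and hr: "\<forall>x\<in>TD. h (r x) = ps (h x)"
    and k: "k = 0 \<or> k = 1 \<or> k = 2"
    and Bcl: "\<forall>x\<in>TD. (r x \<in> D \<times> {k} \<longleftrightarrow> x \<in> D \<times> {k})"
    and rk: "\<forall>d\<in>D. r (d, k) = (s d, k)"
    and sD: "\<forall>d\<in>D. s d \<in> D"
    and scard: "card (orb s ` D) = card (orb \<sigma> ` D)"
  shows "\<forall>d\<in>D. snd (h (d, k)) = 2"
proof -
  define B where "B = D \<times> {k}"
  define Y where "Y = h ` B"
  have hinj: "inj_on h TD" and himg: "h ` TD = TD" using hb by (simp_all add: bij_betw_def)
  have BT: "B \<subseteq> TD" unfolding B_def using k by (auto simp: trunc_darts_def)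
  have hT: "h x \<in> TD" if "x \<in> TD" for x
  proof -
    have "h x \<in> h ` TD" using that by (rule imageI)
    thus ?thesis using himg by simp
  qed
  have YT: "Y \<subseteq> TD" unfolding Y_def using BT hT by blast
  have psT: "ps x \<in> TD" if "x \<in> TD" for x using tsT taT that by simp
  have clos: "(ps x \<in> Y) = (x \<in> Y)" if x: "x \<in> TD" for x
  proof -
    have "x \<in> h ` TD" using x himg by simp
    then obtain x0 where x0: "x0 \<in> TD" "x = h x0" by blast
    have "ps x = h (r x0)" using hr x0 by simp
    hence "(ps x \<in> Y) = (h (r x0) \<in> h ` B)" by (simp add: Y_def)
    also have "\<dots> = (r x0 \<in> B)" using inj_on_image_mem_iff[OF hinj _ BT] rT x0(1) by blast
    also have "\<dots> = (x0 \<in> B)" using Bcl x0(1) by (simp add: B_def)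
    also have "\<dots> = (h x0 \<in> h ` B)" using inj_on_image_mem_iff[OF hinj x0(1) BT] by simp
    finally show ?thesis using x0(2) by (simp add: Y_def)
  qed
  have vfst: "\<exists>e\<in>D. \<forall>i. (i = 0 \<or> i = 1 \<or> i = (2::nat)) \<longrightarrow> (\<exists>j. (j = 0 \<or> j = 1 \<or> j = (2::nat)) \<and> h (d, i) = (e, j))"
    if d: "d \<in> D" for d
  proof -
    obtain e where e: "e \<in> D" "h ` ({d} \<times> {0, 1, 2}) = {e} \<times> {0, 1, 2}" using vert d by blast
    have "\<forall>i. (i = 0 \<or> i = 1 \<or> i = (2::nat)) \<longrightarrow> (\<exists>j. (j = 0 \<or> j = 1 \<or> j = (2::nat)) \<and> h (d, i) = (e, j))"
    proof (intro allI impI)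
      fix i :: nat assume i: "i = 0 \<or> i = 1 \<or> i = 2"
      have "h (d, i) \<in> h ` ({d} \<times> {0, 1, 2})" using i by auto
      hence "h (d, i) \<in> {e} \<times> {0, 1, 2}" by (simp only: e(2))
      thus "\<exists>j. (j = 0 \<or> j = 1 \<or> j = (2::nat)) \<and> h (d, i) = (e, j)" by auto
    qed
    thus ?thesis using e(1) by blast
  qed
  have ex: "\<exists>i. (i = 0 \<or> i = 1 \<or> i = (2::nat)) \<and> (e, i) \<in> Y" if e: "e \<in> D" for e
  proof -
    have "(e, 0) \<in> TD" using e by (simp add: TD_iff)
    hence "(e, 0) \<in> h ` TD" using himg by simp
    then obtain x0 where x0: "x0 \<in> TD" "(e, 0) = h x0" by blast
    obtain d i where di: "d \<in> D" "i = 0 \<or> i = 1 \<or> i = (2::nat)" "x0 = (d, i)"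
      using x0(1) unfolding trunc_darts_def by blast
    obtain e' where e': "e' \<in> D" "\<forall>i. (i = 0 \<or> i = 1 \<or> i = (2::nat)) \<longrightarrow> (\<exists>j. (j = 0 \<or> j = 1 \<or> j = (2::nat)) \<and> h (d, i) = (e', j))"
      using vfst[OF di(1)] by blast
    obtain j where j: "h (d, i) = (e', j)" using e' di(2) by blast
    hence ee: "e' = e" using x0(2) di(3) by simp
    obtain j' where j': "j' = 0 \<or> j' = 1 \<or> j' = (2::nat)" "h (d, k) = (e', j')" using e' k by blast
    have "(d, k) \<in> B" using di(1) by (simp add: B_def)
    hence "h (d, k) \<in> Y" by (simp add: Y_def)
    thus ?thesis using j' ee by auto
  qed
  have uniq: "i = i'" if y1: "(e, i) \<in> Y" and y2: "(e, i') \<in> Y" for e i i'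
  proof -
    obtain d where d: "d \<in> D" "(e, i) = h (d, k)" using y1 unfolding Y_def B_def by blast
    obtain d' where d': "d' \<in> D" "(e, i') = h (d', k)" using y2 unfolding Y_def B_def by blast
    obtain e1 where e1: "e1 \<in> D" "h ` ({d} \<times> {0, 1, 2}) = {e1} \<times> {0, 1, 2}" using vert d(1) by blast
    have "h (d, k) \<in> h ` ({d} \<times> {0, 1, 2})" using k by auto
    hence "h (d, k) \<in> {e1} \<times> {0, 1, 2}" by (simp only: e1(2))
    hence "e1 = e" using d(2) by (metis SigmaD1 fst_conv singletonD)
    have "i' = 0 \<or> i' = 1 \<or> i' = 2"
    proof -
      have "(d', k) \<in> TD" using d'(1) k by (simp add: TD_iff)
      hence "h (d', k) \<in> TD" by (rule hT)
      thus ?thesis using d'(2)[symmetric] by (simp add: TD_iff)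
    qed
    hence "(e, i') \<in> {e1} \<times> {0, 1, 2}" using \<open>e1 = e\<close> by auto
    hence "h (d', k) \<in> h ` ({d} \<times> {0, 1, 2})" by (simp only: e1(2) d'(2)[symmetric])
    then obtain y where y: "y \<in> {d} \<times> {0, 1, 2}" "h (d', k) = h y" by blast
    have yT: "y \<in> TD" using y(1) d(1) by (auto simp: trunc_darts_def)
    have dkT: "(d', k) \<in> TD" using d'(1) k by (simp add: TD_iff)
    have "(d', k) = y" using inj_onD[OF hinj y(2) dkT yT] .
    hence "d' = d" using y(1) by auto
    hence "(e, i) = (e, i')" using d(2) d'(2) by simp
    thus ?thesis by simp
  qed
  define X where "X = {e \<in> D. (e, 2) \<in> Y}"
  show ?thesis
  proof (cases "X = {}")
    case False
    then obtain x0 where x0: "x0 \<in> X" by blast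
    have XD: "X \<subseteq> D" unfolding X_def by blast
    have Xcl: "\<forall>x\<in>X. \<alpha> x \<in> X \<and> \<sigma> x \<in> X"
    proof
      fix e assume eX: "e \<in> X"
      hence eD: "e \<in> D" and e2: "(e, 2) \<in> Y" unfolding X_def by blast+
      have aeD: "\<alpha> e \<in> D" using a_in eD by blast
      have seD: "\<sigma> e \<in> D" using s_in eD by blast
      have "ps (\<sigma> e, 2) = (e, 2)" using ps2[OF seD] si_s[OF eD] by simp
      hence "(\<sigma> e, 2) \<in> Y" using clos[of "(\<sigma> e, 2)"] e2 seD by (simp add: TD_iff)
      hence s: "\<sigma> e \<in> X" using seD by (simp add: X_def)
      have e0: "(e, 0) \<notin> Y" using uniq[OF e2] by fastforce
      have e1: "(e, 1) \<notin> Y" using uniq[OF e2] by fastforce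
      have "(\<alpha> e, 1) \<notin> Y" using clos[of "(e, 0)"] e0 ps0[OF eD] eD by (simp add: TD_iff)
      moreover have "(\<alpha> e, 0) \<notin> Y" using clos[of "(\<alpha> e, 0)"] e1 ps0[OF aeD] a_a[OF eD] aeD by (simp add: TD_iff)
      moreover obtain i where "i = 0 \<or> i = 1 \<or> i = (2::nat)" "(\<alpha> e, i) \<in> Y" using ex[OF aeD] by blast
      ultimately have "(\<alpha> e, 2) \<in> Y" by auto
      hence "\<alpha> e \<in> X" using aeD by (simp add: X_def)
      thus "\<alpha> e \<in> X \<and> \<sigma> e \<in> X" using s by blast
    qed
    have XeqD: "X = D" by (rule conn[OF XD x0 Xcl])
    show ?thesis
    proof
      fix d assume d: "d \<in> D"
      have "(d, k) \<in> TD" using d k by (simp add: TD_iff)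
      hence "h (d, k) \<in> TD" by (rule hT)
      then obtain e i where ei: "h (d, k) = (e, i)" "e \<in> D" by (cases "h (d, k)") (auto simp: TD_iff)
      have "(d, k) \<in> B" using d by (simp add: B_def)
      hence "(e, i) \<in> Y" using ei(1) unfolding Y_def by (metis imageI)
      moreover have "(e, 2) \<in> Y" using ei(2) XeqD unfolding X_def by blast
      ultimately have "i = 2" using uniq by blast
      thus "snd (h (d, k)) = 2" using ei(1) by simp
    qed
  next
    case True
    hence no2: "(e, 2) \<notin> Y" if "e \<in> D" for e using that unfolding X_def by blast
    define Z where "Z = {e \<in> D. (e, 0) \<in> Y}"
    have ZD: "Z \<subseteq> D" unfolding Z_def by blast
    have o01: "((e, 0) \<in> Y) = ((e, 1) \<notin> Y)" if e: "e \<in> D" for e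
    proof -
      obtain i where i: "i = 0 \<or> i = 1 \<or> i = (2::nat)" "(e, i) \<in> Y" using ex[OF e] by blast
      have "i \<noteq> 2" using i(2) no2[OF e] by auto
      show ?thesis
      proof
        assume "(e, 0) \<in> Y" thus "(e, 1) \<notin> Y" using uniq by fastforce
      next
        assume "(e, 1) \<notin> Y" thus "(e, 0) \<in> Y" using i \<open>i \<noteq> 2\<close> by auto
      qed
    qed
    have sa: "\<forall>e\<in>D. (\<alpha> e \<in> Z \<longleftrightarrow> e \<notin> Z)"
    proof
      fix e assume eD: "e \<in> D"
      have aeD: "\<alpha> e \<in> D" using a_in eD by blast
      have "((e, 0) \<in> Y) = ((\<alpha> e, 1) \<in> Y)" using clos[of "(e, 0)"] ps0[OF eD] eD by (simp add: TD_iff)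
      also have "\<dots> = ((\<alpha> e, 0) \<notin> Y)" using o01[OF aeD] by simp
      finally show "(\<alpha> e \<in> Z \<longleftrightarrow> e \<notin> Z)" using eD aeD unfolding Z_def by blast
    qed
    have ss: "\<forall>e\<in>D. (\<sigma> e \<in> Z \<longleftrightarrow> e \<notin> Z)"
    proof
      fix e assume eD: "e \<in> D"
      have seD: "\<sigma> e \<in> D" using s_in eD by blast
      have "((\<sigma> e, 0) \<in> Y) = ((e, 1) \<in> Y)" using clos[of "(e, 1)"] ps1[OF eD] eD by (simp add: TD_iff)
      also have "\<dots> = ((e, 0) \<notin> Y)" using o01[OF eD] by simp
      finally show "(\<sigma> e \<in> Z \<longleftrightarrow> e \<notin> Z)" using eD seD unfolding Z_def by blast
    qed
    define pi where "pi d = fst (h (d, k))" for d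
    have hdk: "h (d, k) \<in> Y" if "d \<in> D" for d
    proof -
      have "(d, k) \<in> B" using that by (simp add: B_def)
      thus ?thesis unfolding Y_def by (rule imageI)
    qed
    have hdkT: "h (d, k) \<in> TD" if "d \<in> D" for d using hdk[OF that] YT by blast
    have hdk_eq: "h (d, k) = (pi d, snd (h (d, k)))" for d by (simp add: pi_def)
    have piD: "pi d \<in> D" if "d \<in> D" for d
      using hdkT[OF that] hdk_eq[of d] by (metis TD_iff)
    have pi_im: "pi ` D = D"
    proof (intro equalityI subsetI)
      fix e assume "e \<in> pi ` D" thus "e \<in> D" using piD by blast
    next
      fix e assume e: "e \<in> D"
      obtain i where "(e, i) \<in> Y" using ex[OF e] by blast
      then obtain d where d: "d \<in> D" "(e, i) = h (d, k)" unfolding Y_def B_def by blast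
      hence "pi d = e" using d(2)[symmetric] by (simp add: pi_def)
      thus "e \<in> pi ` D" using d(1) by blast
    qed
    have pi_inj: "inj_on pi D"
    proof (rule inj_onI)
      fix d d' assume dd: "d \<in> D" "d' \<in> D" "pi d = pi d'"
      have "(pi d, snd (h (d, k))) \<in> Y" using hdk[OF dd(1)] hdk_eq[of d] by simp
      moreover have "(pi d, snd (h (d', k))) \<in> Y" using hdk[OF dd(2)] hdk_eq[of d'] dd(3) by simp
      ultimately have "snd (h (d, k)) = snd (h (d', k))" by (rule uniq)
      hence "h (d, k) = h (d', k)" using hdk_eq[of d] hdk_eq[of d'] dd(3) by simp
      moreover have "(d, k) \<in> TD" "(d', k) \<in> TD" using dd k by (simp_all add: TD_iff)
      ultimately have "(d, k) = (d', k)" using inj_onD[OF hinj] by blast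
      thus "d = d'" by simp
    qed
    define q where "q e = (if e \<in> Z then \<alpha> e else \<sigma> e)" for e
    have conj: "\<forall>d\<in>D. pi (s d) = q (pi d)"
    proof
      fix d assume d: "d \<in> D"
      have pd: "pi d \<in> D" by (rule piD[OF d])
      have "(d, k) \<in> TD" using d k by (simp add: TD_iff)
      hence "h (r (d, k)) = ps (h (d, k))" using hr by blast
      hence hs: "h (s d, k) = ps (pi d, snd (h (d, k)))" using rk d hdk_eq[of d] by simp
      have inY: "(pi d, snd (h (d, k))) \<in> Y" using hdk[OF d] hdk_eq[of d] by simp
      have "snd (h (d, k)) \<noteq> 2" using inY no2[OF pd] by auto
      moreover have "snd (h (d, k)) = 0 \<or> snd (h (d, k)) = 1 \<or> snd (h (d, k)) = 2"
        using hdkT[OF d] hdk_eq[of d] by (metis TD_iff)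
      ultimately consider (c0) "snd (h (d, k)) = 0" | (c1) "snd (h (d, k)) = 1" by auto
      thus "pi (s d) = q (pi d)"
      proof cases
        case c0
        hence "pi d \<in> Z" using inY pd by (simp add: Z_def)
        moreover have "h (s d, k) = (\<alpha> (pi d), 1)" using hs c0 ps0[OF pd] by simp
        ultimately show ?thesis by (simp add: pi_def q_def)
      next
        case c1
        hence "(pi d, 1) \<in> Y" using inY by simp
        hence "pi d \<notin> Z" using o01[OF pd] by (simp add: Z_def)
        moreover have "h (s d, k) = (\<sigma> (pi d), 0)" using hs c1 ps1[OF pd] by simp
        ultimately show ?thesis by (simp add: pi_def q_def)
      qed
    qed
    have c1: "card (orb q ` D) = card (orb \<sigma> ` D)"
      using card_orbs_conj[OF pi_inj sD conj] pi_im scard by simp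
    have qD: "\<forall>x\<in>D. q x \<in> D" using a_in s_in by (simp add: q_def)
    have qsw: "\<forall>x\<in>D. (q x \<in> Z \<longleftrightarrow> x \<notin> Z)" using sa ss by (simp add: q_def)
    have qinj: "inj_on q D"
    proof (rule inj_onI)
      fix x y assume xy: "x \<in> D" "y \<in> D" "q x = q y"
      have "(q x \<in> Z) = (q y \<in> Z)" using xy(3) by simp
      hence zz: "(x \<in> Z) = (y \<in> Z)" using qsw xy(1,2) by blast
      show "x = y"
      proof (cases "x \<in> Z")
        case True
        hence "\<alpha> x = \<alpha> y" using zz xy(3) by (simp add: q_def)
        thus ?thesis using inj_onD[OF inj_a _ xy(1,2)] by simp
      next
        case False
        hence "\<sigma> x = \<sigma> y" using zz xy(3) by (simp add: q_def)
        thus ?thesis using inj_onD[OF inj_s _ xy(1,2)] by simp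
      qed
    qed
    have c2: "card (orb q ` D) = card (orb (q \<circ> q) ` Z)"
      by (rule card_orbs_two_step[OF fin qinj qD ZD qsw])
    have qqZ: "\<forall>x\<in>Z. (q \<circ> q) x \<in> Z" using qsw ZD qD by auto
    have qq_ph: "\<forall>x\<in>Z. (q \<circ> q) x = ph x"
    proof
      fix x assume x: "x \<in> Z"
      have xD: "x \<in> D" using x ZD by blast
      have "\<alpha> x \<notin> Z" using sa xD x by blast
      thus "(q \<circ> q) x = ph x" using x by (simp add: q_def)
    qed
    have "orb (q \<circ> q) ` Z = orb ph ` Z"
    proof (rule image_cong)
      fix x assume "x \<in> Z" thus "orb (q \<circ> q) x = orb ph x" by (rule orb_cong[OF qqZ qq_ph])
    qed simp
    hence "card (orb \<sigma> ` D) = card (orb ph ` Z)" using c1 c2 by simp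
    from euler_contra[OF ZD sa ss this] show ?thesis ..
  qed
qed

end


declare One_nat_def [simp del]

context pmap
begin

lemma finTD: "finite TD" using fin by (simp add: trunc_darts_def)

lemma Dne: "D \<noteq> {}" using cm by (simp add: comb_map_def)

lemma img3: "h ` ({d} \<times> {0, 1, 2}) = {h (d, 0), h (d, 1), h (d, 2::nat)}"
  by auto

lemma blk3: "{e} \<times> {0, 1, 2::nat} = {(e, 0), (e, 1), (e, 2)}"
  by auto

lemma surj_part:
  assumes hA: "map_aut TD ta ts h"
  shows "\<exists>g. map_aut D \<alpha> \<sigma> g \<and> trunc_induced D \<sigma> g = h"
proof -
  have hb: "bij_betw h TD TD" and hout: "\<forall>x. x \<notin> TD \<longrightarrow> h x = x"
    and ha: "\<forall>x\<in>TD. h (ta x) = ta (h x)"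
    and hor: "orientation_preserving TD ts h \<or> (\<forall>x\<in>TD. h (ts x) = tsi (h x))"
    using hA by (simp_all add: map_aut_def)
  have hinj: "inj_on h TD" and himg: "h ` TD = TD" using hb by (simp_all add: bij_betw_def)
  have hT: "h x \<in> TD" if "x \<in> TD" for x
  proof -
    have "h x \<in> h ` TD" using that by (rule imageI)
    thus ?thesis using himg by simp
  qed
  have d0T: "(d, 0) \<in> TD" "(d, 1) \<in> TD" "(d, 2) \<in> TD" if "d \<in> D" for d
    using that by (simp_all add: TD_iff)
  have t0: "\<forall>d\<in>D. \<exists>e\<in>D. h (d, 0) = (e, 0)"
  proof (cases "orientation_preserving TD ts h")
    case True
    hence hs: "\<forall>x\<in>TD. h (ts x) = ts (h x)" by (simp add: orientation_preserving_def)
    have vert: "\<forall>d\<in>D. \<exists>e\<in>D. h ` ({d} \<times> {0, 1, 2}) = {e} \<times> {0, 1, 2}"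
    proof
      fix d assume d: "d \<in> D"
      obtain e j where ej: "h (d, 0) = (e, j)" "e \<in> D" "j = 0 \<or> j = 1 \<or> j = 2"
        using hT[OF d0T(1)[OF d]] by (cases "h (d, 0)") (auto simp: TD_iff)
      have h1: "h (d, 1) = ts (e, j)" using hs d0T[OF d] ts0[OF d] ej(1) by metis
      have h2: "h (d, 2) = ts (ts (e, j))" using hs d0T[OF d] ts1[OF d] h1 by metis
      have "{h (d, 0), h (d, 1), h (d, 2)} = {(e, 0), (e, 1), (e, 2::nat)}"
        using ej(3)
      proof (elim disjE)
        assume "j = 0" thus ?thesis using ej(1,2) h1 h2 by (auto simp: ts0 ts1 ts2)
      next
        assume "j = 1" thus ?thesis using ej(1,2) h1 h2 by (auto simp: ts0 ts1 ts2)
      next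
        assume "j = 2" thus ?thesis using ej(1,2) h1 h2 by (auto simp: ts0 ts1 ts2)
      qed
      hence "h ` ({d} \<times> {0, 1, 2}) = {e} \<times> {0, 1, 2}" by (simp add: blk3)
      thus "\<exists>e\<in>D. h ` ({d} \<times> {0, 1, 2}) = {e} \<times> {0, 1, 2}" using ej(2) by blast
    qed
    have rT: "\<forall>x\<in>TD. ps x \<in> TD" using tsT taT by simp
    have hr: "\<forall>x\<in>TD. h (ps x) = ps (h x)"
    proof
      fix x assume x: "x \<in> TD"
      have "h (ps x) = ts (h (ta x))" using hs taT[OF x] by simp
      also have "\<dots> = ts (ta (h x))" using ha x by simp
      finally show "h (ps x) = ps (h x)" by simp
    qed
    have Bcl: "\<forall>x\<in>TD. (ps x \<in> D \<times> {2} \<longleftrightarrow> x \<in> D \<times> {2})"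
    proof
      fix x assume "x \<in> TD"
      thus "(ps x \<in> D \<times> {2} \<longleftrightarrow> x \<in> D \<times> {2})"
        by (rule TD_cases) (simp_all add: ta0 ta1 ta2 ts0 ts1 ts2 a_in s_in si_in)
    qed
    have rk: "\<forall>d\<in>D. ps (d, 2) = (si d, 2)" using ps2 by blast
    have sD: "\<forall>d\<in>D. si d \<in> D" using si_in by blast
    have scard: "card (orb si ` D) = card (orb \<sigma> ` D)"
    proof -
      have "orb si ` D = orb \<sigma> ` D"
      proof (rule image_cong)
        fix x assume "x \<in> D" thus "orb si x = orb \<sigma> x" by (rule orb_inv[OF fin bij_s])
      qed simp
      thus ?thesis by simp
    qed
    have k2: "\<forall>d\<in>D. snd (h (d, 2)) = 2"
      by (rule key[OF hb vert rT hr _ Bcl rk sD scard]) simp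
    show ?thesis
    proof
      fix d assume d: "d \<in> D"
      obtain e j where ej: "h (d, 2) = (e, j)" "e \<in> D"
        using hT[OF d0T(3)[OF d]] by (cases "h (d, 2)") (auto simp: TD_iff)
      have "j = 2" using k2 d ej(1) by fastforce
      hence "h (d, 0) = ts (e, 2)" using hs d0T[OF d] ts2[OF d] ej(1) by metis
      thus "\<exists>e\<in>D. h (d, 0) = (e, 0)" using ts2[OF ej(2)] ej(2) by auto
    qed
  next
    case False
    hence hs: "\<forall>x\<in>TD. h (ts x) = tsi (h x)" using hor by simp
    have htsi: "h (tsi y) = ts (h y)" if y: "y \<in> TD" for y
    proof -
      have "h y = h (ts (tsi y))" using ts_tsi[OF y] by simp
      also have "\<dots> = tsi (h (tsi y))" using hs tsiT[OF y] by blast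
      finally have "ts (h y) = ts (tsi (h (tsi y)))" by simp
      also have "\<dots> = h (tsi y)" using ts_tsi[OF hT[OF tsiT[OF y]]] .
      finally show ?thesis by simp
    qed
    have vert: "\<forall>d\<in>D. \<exists>e\<in>D. h ` ({d} \<times> {0, 1, 2}) = {e} \<times> {0, 1, 2}"
    proof
      fix d assume d: "d \<in> D"
      obtain e j where ej: "h (d, 0) = (e, j)" "e \<in> D" "j = 0 \<or> j = 1 \<or> j = 2"
        using hT[OF d0T(1)[OF d]] by (cases "h (d, 0)") (auto simp: TD_iff)
      have h1: "h (d, 1) = tsi (e, j)" using hs d0T[OF d] ts0[OF d] ej(1) by metis
      have h2: "h (d, 2) = tsi (tsi (e, j))" using hs d0T[OF d] ts1[OF d] h1 by metis
      have "{h (d, 0), h (d, 1), h (d, 2)} = {(e, 0), (e, 1), (e, 2::nat)}"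
        using ej(3)
      proof (elim disjE)
        assume "j = 0" thus ?thesis using ej(1,2) h1 h2 by (auto simp: tsi0 tsi1 tsi2)
      next
        assume "j = 1" thus ?thesis using ej(1,2) h1 h2 by (auto simp: tsi0 tsi1 tsi2)
      next
        assume "j = 2" thus ?thesis using ej(1,2) h1 h2 by (auto simp: tsi0 tsi1 tsi2)
      qed
      hence "h ` ({d} \<times> {0, 1, 2}) = {e} \<times> {0, 1, 2}" by (simp add: blk3)
      thus "\<exists>e\<in>D. h ` ({d} \<times> {0, 1, 2}) = {e} \<times> {0, 1, 2}" using ej(2) by blast
    qed
    define r where "r x = tsi (ta x)" for x
    have rT: "\<forall>x\<in>TD. r x \<in> TD" using tsiT taT by (simp add: r_def)
    have hr: "\<forall>x\<in>TD. h (r x) = ps (h x)"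
    proof
      fix x assume x: "x \<in> TD"
      have "h (r x) = ts (h (ta x))" using htsi[OF taT[OF x]] by (simp add: r_def)
      also have "\<dots> = ts (ta (h x))" using ha x by simp
      finally show "h (r x) = ps (h x)" by simp
    qed
    have Bcl: "\<forall>x\<in>TD. (r x \<in> D \<times> {1} \<longleftrightarrow> x \<in> D \<times> {1})"
    proof
      fix x assume "x \<in> TD"
      thus "(r x \<in> D \<times> {1} \<longleftrightarrow> x \<in> D \<times> {1})"
        by (rule TD_cases) (simp_all add: r_def ta0 ta1 ta2 tsi0 tsi1 tsi2 a_in s_in si_in)
    qed
    have rk: "\<forall>d\<in>D. r (d, 1) = (\<sigma> d, 1)" using ta1 tsi2 s_in by (simp add: r_def)
    have k1: "\<forall>d\<in>D. snd (h (d, 1)) = 2"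
      by (rule key[OF hb vert rT hr _ Bcl rk sD refl]) simp
    show ?thesis
    proof
      fix d assume d: "d \<in> D"
      obtain e j where ej: "h (d, 1) = (e, j)" "e \<in> D"
        using hT[OF d0T(2)[OF d]] by (cases "h (d, 1)") (auto simp: TD_iff)
      have "j = 2" using k1 d ej(1) by fastforce
      hence "h (d, 0) = ts (e, 2)" using htsi[OF d0T(2)[OF d]] tsi1[OF d] ej(1) by metis
      thus "\<exists>e\<in>D. h (d, 0) = (e, 0)" using ts2[OF ej(2)] ej(2) by auto
    qed
  qed
  define g where "g d = (if d \<in> D then fst (h (d, 0)) else d)" for d
  have hg0: "h (d, 0) = (g d, 0)" if d: "d \<in> D" for d
  proof -
    obtain e where "e \<in> D" "h (d, 0) = (e, 0)" using t0 d by blast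
    thus ?thesis using d by (simp add: g_def)
  qed
  have gD: "g d \<in> D" if d: "d \<in> D" for d
  proof -
    obtain e where "e \<in> D" "h (d, 0) = (e, 0)" using t0 d by blast
    thus ?thesis using d by (simp add: g_def)
  qed
  have ginj: "inj_on g D"
  proof (rule inj_onI)
    fix x y assume xy: "x \<in> D" "y \<in> D" "g x = g y"
    hence "h (x, 0) = h (y, 0)" using hg0 by simp
    hence "(x, 0) = (y, 0::nat)" using inj_onD[OF hinj _ d0T(1)[OF xy(1)] d0T(1)[OF xy(2)]] by blast
    thus "x = y" by simp
  qed
  have gimg: "g ` D = D" using endo_inj_surj[OF fin _ ginj] gD by blast
  have gbij: "bij_betw g D D" using ginj gimg by (simp add: bij_betw_def)
  have gout: "\<forall>d. d \<notin> D \<longrightarrow> g d = d" by (simp add: g_def)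
  have ga: "\<forall>d\<in>D. g (\<alpha> d) = \<alpha> (g d)"
  proof
    fix d assume d: "d \<in> D"
    have "h (ta (d, 0)) = ta (h (d, 0))" using ha d0T(1)[OF d] by blast
    hence "(g (\<alpha> d), 0) = (\<alpha> (g d), (0::nat))"
      using hg0[OF d] hg0[OF a_in[OF d]] ta0[OF d] ta0[OF gD[OF d]] by simp
    thus "g (\<alpha> d) = \<alpha> (g d)" by simp
  qed
  show ?thesis
  proof (cases "orientation_preserving TD ts h")
    case True
    hence hs: "\<forall>x\<in>TD. h (ts x) = ts (h x)" by (simp add: orientation_preserving_def)
    have hg1: "h (d, 1) = (g d, 1)" if d: "d \<in> D" for d
      using hs d0T[OF d] ts0[OF d] hg0[OF d] ts0[OF gD[OF d]] by metis
    have hg2: "h (d, 2) = (g d, 2)" if d: "d \<in> D" for d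
      using hs d0T[OF d] ts1[OF d] hg1[OF d] ts1[OF gD[OF d]] by metis
    have gs: "\<forall>d\<in>D. g (\<sigma> d) = \<sigma> (g d)"
    proof
      fix d assume d: "d \<in> D"
      have "h (ta (d, 1)) = ta (h (d, 1))" using ha d0T(2)[OF d] by blast
      hence "(g (\<sigma> d), 2) = (\<sigma> (g d), (2::nat))"
        using hg1[OF d] hg2[OF s_in[OF d]] ta1[OF d] ta1[OF gD[OF d]] by simp
      thus "g (\<sigma> d) = \<sigma> (g d)" by simp
    qed
    have gop: "orientation_preserving D \<sigma> g" using gs by (simp add: orientation_preserving_def)
    have gA: "map_aut D \<alpha> \<sigma> g" using gbij gout ga gop by (simp add: map_aut_def)
    have "trunc_induced D \<sigma> g = h"
    proof
      fix x show "trunc_induced D \<sigma> g x = h x"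
      proof (cases "x \<in> TD")
        case True
        thus ?thesis
          by (rule TD_cases) (simp_all add: trunc_induced_def gop hg0 hg1 hg2 TD_iff)
      next
        case False
        have "h x = x" using hout False by blast
        thus ?thesis using False by (simp add: trunc_induced_def)
      qed
    qed
    thus ?thesis using gA by blast
  next
    case False
    hence hs: "\<forall>x\<in>TD. h (ts x) = tsi (h x)" using hor by simp
    have hg1: "h (d, 1) = (g d, 2)" if d: "d \<in> D" for d
      using hs d0T[OF d] ts0[OF d] hg0[OF d] tsi0[OF gD[OF d]] by metis
    have hg2: "h (d, 2) = (g d, 1)" if d: "d \<in> D" for d
      using hs d0T[OF d] ts1[OF d] hg1[OF d] tsi2[OF gD[OF d]] by metis
    have gs: "\<forall>d\<in>D. g (\<sigma> d) = si (g d)"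
    proof
      fix d assume d: "d \<in> D"
      have "h (ta (d, 1)) = ta (h (d, 1))" using ha d0T(2)[OF d] by blast
      hence "(g (\<sigma> d), 1) = (si (g d), (1::nat))"
        using hg1[OF d] hg2[OF s_in[OF d]] ta1[OF d] ta2[OF gD[OF d]] by simp
      thus "g (\<sigma> d) = si (g d)" by simp
    qed
    have gnop: "\<not> orientation_preserving D \<sigma> g"
    proof
      assume "orientation_preserving D \<sigma> g"
      hence op: "\<forall>d\<in>D. g (\<sigma> d) = \<sigma> (g d)" by (simp add: orientation_preserving_def)
      obtain d0 where d0: "d0 \<in> D" using Dne by blast
      have "\<sigma> (g d0) = si (g d0)" using op gs d0 by simp
      hence "\<sigma> (\<sigma> (g d0)) = g d0" using s_si[OF gD[OF d0]] by simp
      thus False using ss_neq[OF gD[OF d0]] by simp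
    qed
    have gA: "map_aut D \<alpha> \<sigma> g" using gbij gout ga gs by (simp add: map_aut_def)
    have "trunc_induced D \<sigma> g = h"
    proof
      fix x show "trunc_induced D \<sigma> g x = h x"
      proof (cases "x \<in> TD")
        case True
        thus ?thesis
          by (rule TD_cases) (simp_all add: trunc_induced_def gnop hg0 hg1 hg2 TD_iff)
      next
        case False
        have "h x = x" using hout False by blast
        thus ?thesis using False by (simp add: trunc_induced_def)
      qed
    qed
    thus ?thesis using gA by blast
  qed
qed

end



context pmap
begin

lemma induced_aut:
  assumes gA: "map_aut D \<alpha> \<sigma> g"
  shows "map_aut TD ta ts (trunc_induced D \<sigma> g)"
proof -
  have gb: "bij_betw g D D" and gout: "\<forall>d. d \<notin> D \<longrightarrow> g d = d"
    and ga: "\<forall>d\<in>D. g (\<alpha> d) = \<alpha> (g d)"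
    and gor: "orientation_preserving D \<sigma> g \<or> (\<forall>d\<in>D. g (\<sigma> d) = si (g d))"
    using gA by (simp_all add: map_aut_def)
  have ginj: "inj_on g D" and gimg: "g ` D = D" using gb by (simp_all add: bij_betw_def)
  have gD: "g d \<in> D" if "d \<in> D" for d
  proof -
    have "g d \<in> g ` D" using that by (rule imageI)
    thus ?thesis using gimg by simp
  qed
  define H where "H = trunc_induced D \<sigma> g"
  define tau where "tau i = (if orientation_preserving D \<sigma> g \<or> i = 0 then i else 3 - i)" for i :: nat
  have Hf: "H x = (g (fst x), tau (snd x))" if "x \<in> TD" for x
    using that by (cases x) (simp add: H_def trunc_induced_def tau_def)
  have tau3: "tau i = 0 \<or> tau i = 1 \<or> tau i = 2" if "i = 0 \<or> i = 1 \<or> i = (2::nat)" for i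
    using that by (auto simp: tau_def)
  have tauinj: "i = j" if "i = 0 \<or> i = 1 \<or> i = (2::nat)" "j = 0 \<or> j = 1 \<or> j = (2::nat)" "tau i = tau j" for i j
    using that by (auto simp: tau_def split: if_splits)
  have HT: "H x \<in> TD" if x: "x \<in> TD" for x
  proof -
    obtain d i where di: "x = (d, i)" "d \<in> D" "i = 0 \<or> i = 1 \<or> i = (2::nat)" using x by (cases x) (auto simp: TD_iff)
    thus ?thesis using Hf[OF x] gD[OF di(2)] tau3[OF di(3)] by (simp add: TD_iff)
  qed
  have Hinj: "inj_on H TD"
  proof (rule inj_onI)
    fix x y assume xy: "x \<in> TD" "y \<in> TD" "H x = H y"
    obtain d i where di: "x = (d, i)" "d \<in> D" "i = 0 \<or> i = 1 \<or> i = (2::nat)" using xy(1) by (cases x) (auto simp: TD_iff)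
    obtain d' i' where di': "y = (d', i')" "d' \<in> D" "i' = 0 \<or> i' = 1 \<or> i' = (2::nat)" using xy(2) by (cases y) (auto simp: TD_iff)
    have "(g d, tau i) = (g d', tau i')" using xy(3) Hf[OF xy(1)] Hf[OF xy(2)] di(1) di'(1) by simp
    hence "g d = g d'" "tau i = tau i'" by simp_all
    hence "d = d'" "i = i'" using inj_onD[OF ginj _ di(2) di'(2)] tauinj[OF di(3) di'(3)] by simp_all
    thus "x = y" using di(1) di'(1) by simp
  qed
  have Himg: "H ` TD = TD" using endo_inj_surj[OF finTD _ Hinj] HT by blast
  have Hb: "bij_betw H TD TD" using Hinj Himg by (simp add: bij_betw_def)
  have Hout: "\<forall>x. x \<notin> TD \<longrightarrow> H x = x" by (simp add: H_def trunc_induced_def)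
  have main: "(\<forall>x\<in>TD. H (ta x) = ta (H x)) \<and>
      (orientation_preserving TD ts H \<or> (\<forall>x\<in>TD. H (ts x) = tsi (H x)))"
  proof (cases "orientation_preserving D \<sigma> g")
    case True
    hence gs: "\<forall>d\<in>D. g (\<sigma> d) = \<sigma> (g d)" by (simp add: orientation_preserving_def)
    have gsi: "g (si d) = si (g d)" if d: "d \<in> D" for d
    proof -
      have "g (\<sigma> (si d)) = \<sigma> (g (si d))" using gs si_in[OF d] by blast
      hence "g d = \<sigma> (g (si d))" using s_si[OF d] by simp
      hence "si (g d) = si (\<sigma> (g (si d)))" by simp
      thus ?thesis using si_s[OF gD[OF si_in[OF d]]] by simp
    qed
    have H3: "H (d, i) = (g d, i)" if "d \<in> D" "i = 0 \<or> i = 1 \<or> i = (2::nat)" for d i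
      using Hf[of "(d, i)"] that True by (simp add: TD_iff tau_def)
    have "\<forall>x\<in>TD. H (ta x) = ta (H x)"
    proof
      fix x assume "x \<in> TD"
      thus "H (ta x) = ta (H x)"
        by (rule TD_cases) (simp_all add: H3 ta0 ta1 ta2 a_in s_in si_in gD ga gs gsi)
    qed
    moreover have "orientation_preserving TD ts H"
      unfolding orientation_preserving_def
    proof
      fix x assume "x \<in> TD"
      thus "H (ts x) = ts (H x)"
        by (rule TD_cases) (simp_all add: H3 ts0 ts1 ts2 gD)
    qed
    ultimately show ?thesis by blast
  next
    case False
    hence gs: "\<forall>d\<in>D. g (\<sigma> d) = si (g d)" using gor by simp
    have gsi: "g (si d) = \<sigma> (g d)" if d: "d \<in> D" for d
    proof -
      have "g (\<sigma> (si d)) = si (g (si d))" using gs si_in[OF d] by blast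
      hence "g d = si (g (si d))" using s_si[OF d] by simp
      hence "\<sigma> (g d) = \<sigma> (si (g (si d)))" by simp
      thus ?thesis using s_si[OF gD[OF si_in[OF d]]] by simp
    qed
    have H0: "H (d, 0) = (g d, 0)" and H1: "H (d, 1) = (g d, 2)" and H2: "H (d, 2) = (g d, 1)"
      if "d \<in> D" for d
      using Hf[of "(d, 0)"] Hf[of "(d, 1)"] Hf[of "(d, 2)"] that False by (simp_all add: TD_iff tau_def)
    have "\<forall>x\<in>TD. H (ta x) = ta (H x)"
    proof
      fix x assume "x \<in> TD"
      thus "H (ta x) = ta (H x)"
        by (rule TD_cases) (simp_all add: H0 H1 H2 ta0 ta1 ta2 a_in s_in si_in gD ga gs gsi)
    qed
    moreover have "\<forall>x\<in>TD. H (ts x) = tsi (H x)"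
    proof
      fix x assume "x \<in> TD"
      thus "H (ts x) = tsi (H x)"
        by (rule TD_cases) (simp_all add: H0 H1 H2 ts0 ts1 ts2 tsi0 tsi1 tsi2 gD)
    qed
    ultimately show ?thesis by blast
  qed
  show ?thesis using Hb Hout main by (simp add: map_aut_def H_def)
qed

lemma induced_inj: "inj_on (trunc_induced D \<sigma>) (Aut D \<alpha> \<sigma>)"
proof (rule inj_onI)
  fix g1 g2 assume g: "g1 \<in> Aut D \<alpha> \<sigma>" "g2 \<in> Aut D \<alpha> \<sigma>" "trunc_induced D \<sigma> g1 = trunc_induced D \<sigma> g2"
  have o1: "\<forall>d. d \<notin> D \<longrightarrow> g1 d = d" and o2: "\<forall>d. d \<notin> D \<longrightarrow> g2 d = d"
    using g(1,2) by (simp_all add: Aut_def map_aut_def)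
  show "g1 = g2"
  proof
    fix x show "g1 x = g2 x"
    proof (cases "x \<in> D")
      case True
      have "trunc_induced D \<sigma> g1 (x, 0) = trunc_induced D \<sigma> g2 (x, 0)" using g(3) by simp
      thus ?thesis using True by (simp add: trunc_induced_def TD_iff)
    next
      case False thus ?thesis using o1 o2 by simp
    qed
  qed
qed

end

theorem lemma8:
  fixes D :: "'d set" and \<alpha> \<sigma> :: "'d \<Rightarrow> 'd"
  assumes "polyhedron D \<alpha> \<sigma>"
  shows "bij_betw (trunc_induced D \<sigma>) (Aut D \<alpha> \<sigma>)
           (Aut (trunc_darts D) (trunc_alpha D \<alpha> \<sigma>) (trunc_sigma D))
         \<and> card (Aut (trunc_darts D) (trunc_alpha D \<alpha> \<sigma>) (trunc_sigma D)) = card (Aut D \<alpha> \<sigma>)"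
proof -
  interpret pmap D \<alpha> \<sigma> by (rule pmap.intro) (rule assms)
  have im: "trunc_induced D \<sigma> ` Aut D \<alpha> \<sigma> = Aut (trunc_darts D) (trunc_alpha D \<alpha> \<sigma>) (trunc_sigma D)"
  proof (intro equalityI subsetI)
    fix h assume "h \<in> trunc_induced D \<sigma> ` Aut D \<alpha> \<sigma>"
    then obtain g where "g \<in> Aut D \<alpha> \<sigma>" "h = trunc_induced D \<sigma> g" by blast
    thus "h \<in> Aut (trunc_darts D) (trunc_alpha D \<alpha> \<sigma>) (trunc_sigma D)"
      using induced_aut by (simp add: Aut_def)
  next
    fix h assume "h \<in> Aut (trunc_darts D) (trunc_alpha D \<alpha> \<sigma>) (trunc_sigma D)"
    hence "map_aut TD ta ts h" by (simp add: Aut_def)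
    then obtain g where "map_aut D \<alpha> \<sigma> g" "trunc_induced D \<sigma> g = h" using surj_part by blast
    thus "h \<in> trunc_induced D \<sigma> ` Aut D \<alpha> \<sigma>" by (auto simp: Aut_def)
  qed
  have b: "bij_betw (trunc_induced D \<sigma>) (Aut D \<alpha> \<sigma>)
           (Aut (trunc_darts D) (trunc_alpha D \<alpha> \<sigma>) (trunc_sigma D))"
    using induced_inj im by (simp add: bij_betw_def)
  moreover have "card (Aut (trunc_darts D) (trunc_alpha D \<alpha> \<sigma>) (trunc_sigma D)) = card (Aut D \<alpha> \<sigma>)"
    using bij_betw_same_card[OF b] by simp
  ultimately show ?thesis by blast
qed


end
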